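(* Let $\Gamma$ be a finitely generated infinite group, $\{\Gamma_n\}$ a sequence of finite-index normal subgroups with $\bigcap_n\bigcup_{i\ge n}\Gamma_i=\{e\}$, $\pi_n:\Gamma\to\Gamma/\Gamma_n$ the quotient maps, and $S\subset\Gamma\setminus\{e\}$ a finite symmetric generating set. For every finite $A\subset\Gamma$ there is a finite $B\subset\Gamma$ with $A\subset B$ such that for all sufficiently large $n$, the set $(\Gamma/\Gamma_n)\setminus\pi_n(B)$ is connected in the Cayley graph $C(\Gamma/\Gamma_n,\pi_n(S))$.
   Context: $C(\Gamma/\Gamma_n,\pi_n(S))$ has vertex set $\Gamma/\Gamma_n$ and edges $\{g\Gamma_n,gs\Gamma_n\}$ for $g\in\Gamma,s\in S$. A vertex subset is connected if its induced subgraph (all edges with both endpoints in the set) is connected. *)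

theory Defs
  imports "HOL-Algebra.Algebra"
begin

definition quot_vertices :: "('a, 'b) monoid_scheme \<Rightarrow> 'a set \<Rightarrow> 'a set set" where
  "quot_vertices G H = (\<lambda>g. l_coset G g H) ` carrier G"

definition cayley_edge :: "('a, 'b) monoid_scheme \<Rightarrow> 'a set \<Rightarrow> 'a set \<Rightarrow> 'a set \<Rightarrow> 'a set \<Rightarrow> bool" where
  "cayley_edge G H S U V \<longleftrightarrow>
     (\<exists>g\<in>carrier G. \<exists>s\<in>S.
        (U = l_coset G g H \<and> V = l_coset G (monoid.mult G g s) H) \<or>
        (V = l_coset G g H \<and> U = l_coset G (monoid.mult G g s) H))"

definition cayley_connected :: "('a, 'b) monoid_scheme \<Rightarrow> 'a set \<Rightarrow> 'a set \<Rightarrow> 'a set set \<Rightarrow> bool" where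
  "cayley_connected G H S W \<longleftrightarrow>
     (\<forall>U\<in>W. \<forall>V\<in>W. (\<lambda>A B. A \<in> W \<and> B \<in> W \<and> cayley_edge G H S A B)\<^sup>*\<^sup>* U V)"

end

theory Submission imports Defs begin

lemma exit_path:
  assumes "r\<^sup>*\<^sup>* x z" "P x" "\<not> P z"
  shows "\<exists>y y'. (\<lambda>a b. P a \<and> P b \<and> r a b)\<^sup>*\<^sup>* x y \<and> P y \<and> r y y' \<and> \<not> P y'"
  using assms
proof (induction rule: converse_rtranclp_induct)
  case base then show ?case by simp
next
  case (step x w)
  show ?case
  proof (cases "P w")
    case True
    then obtain y y' where p: "(\<lambda>a b. P a \<and> P b \<and> r a b)\<^sup>*\<^sup>* w y" "P y" "r y y'" "\<not> P y'"
      using step by blast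
    have r1: "(\<lambda>a b. P a \<and> P b \<and> r a b) x w" using True step by blast
    have "(\<lambda>a b. P a \<and> P b \<and> r a b)\<^sup>*\<^sup>* x y" by (rule converse_rtranclp_into_rtranclp[OF r1 p(1)])
    then show ?thesis using \<open>P y\<close> \<open>r y y'\<close> \<open>\<not> P y'\<close> by blast
  next
    case False then show ?thesis using step by blast
  qed
qed

lemma rtranclp_map:
  assumes "r\<^sup>*\<^sup>* a b" "\<And>x y. r x y \<Longrightarrow> r' (f x) (f y)"
  shows "r'\<^sup>*\<^sup>* (f a) (f b)"
  using assms(1)
proof (induction rule: rtranclp_induct)
  case base then show ?case by simp
next
  case (step y z) then show ?case using assms(2) by (meson rtranclp.rtrancl_into_rtrancl)
qed

lemma rtranclp_sym:
  assumes "r\<^sup>*\<^sup>* a b" "\<And>x y. r x y \<Longrightarrow> r y x"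
  shows "r\<^sup>*\<^sup>* b a"
  using assms(1)
proof (induction rule: rtranclp_induct)
  case base then show ?case by simp
next
  case (step y z) then show ?case using assms(2) by (meson converse_rtranclp_into_rtranclp)
qed

lemma rtranclp_mono_restr:
  assumes "r\<^sup>*\<^sup>* a b" "\<And>x y. r x y \<Longrightarrow> r' x y"
  shows "r'\<^sup>*\<^sup>* a b"
  using rtranclp_map[of r a b r' id] assms by simp

locale cay = group G for G (structure) +
  fixes H S B
  assumes nH: "H \<lhd> G"
    and finV: "finite (quot_vertices G H)"
    and S_sub: "S \<subseteq> carrier G"
    and S_inv: "\<And>s. s \<in> S \<Longrightarrow> inv s \<in> S"
    and gen: "generate G S = carrier G"
    and B_sub: "B \<subseteq> carrier G"
    and one_B: "\<one> \<in> B"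
    and B_conn: "\<And>b. b \<in> B \<Longrightarrow> (\<lambda>x y. x \<in> B \<and> y \<in> B \<and> (\<exists>s\<in>S. y = x \<otimes> s))\<^sup>*\<^sup>* \<one> b"
    and B_closed: "\<And>K. finite K \<Longrightarrow> K \<subseteq> carrier G \<Longrightarrow> K \<inter> B = {} \<Longrightarrow>
                      (\<forall>x\<in>K. \<forall>s\<in>S. x \<otimes> s \<in> K \<union> B) \<Longrightarrow> K = {}"
    and finB: "finite B"
    and inj: "\<And>x y. x \<in> (\<lambda>(b,b',s). b' \<otimes> inv b \<otimes> s) ` (B \<times> B \<times> insert \<one> S) \<Longrightarrow>
                  y \<in> (\<lambda>(b,b',s). b' \<otimes> inv b \<otimes> s) ` (B \<times> B \<times> insert \<one> S) \<Longrightarrow>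
                  inv x \<otimes> y \<in> H \<Longrightarrow> x = y"
begin

definition pr where "pr g = g <# H"
definition V where "V = quot_vertices G H"
definition E where "E = cayley_edge G H S"
definition W where "W = V - pr ` B"
definition conn where "conn = (\<lambda>A C. A \<in> W \<and> C \<in> W \<and> E A C)\<^sup>*\<^sup>*"
definition step where "step x y \<longleftrightarrow> x \<in> carrier G \<and> (\<exists>s\<in>S. y = x \<otimes> s)"
definition far where "far h \<longleftrightarrow> h \<in> carrier G \<and> (\<forall>b\<in>B. pr (h \<otimes> b) \<notin> pr ` B)"

lemma sgH: "subgroup H G" using nH normal_def by blast

lemma HC: "H \<subseteq> carrier G" using sgH subgroup.subset by blast

lemma pr_eq: assumes "x \<in> carrier G" "y \<in> carrier G"
  shows "pr x = pr y \<longleftrightarrow> inv x \<otimes> y \<in> H"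
proof
  assume "pr x = pr y"
  have "y \<in> pr y" unfolding pr_def l_coset_def using assms sgH subgroup.one_closed by force
  then obtain h where "h \<in> H" "y = x \<otimes> h" using \<open>pr x = pr y\<close> unfolding pr_def l_coset_def by auto
  moreover have "h \<in> carrier G" using \<open>h \<in> H\<close> HC by blast
  ultimately show "inv x \<otimes> y \<in> H" using assms \<open>h \<in> H\<close> by (simp add: m_assoc[symmetric])
next
  assume a: "inv x \<otimes> y \<in> H"
  define h where "h = inv x \<otimes> y"
  have hH: "h \<in> H" using a h_def by simp
  have y: "y = x \<otimes> h" using assms h_def by (simp add: m_assoc[symmetric])
  have "h <# H = H"
  proof
    show "h <# H \<subseteq> H" unfolding l_coset_def using hH sgH subgroup.m_closed by fastforce
    show "H \<subseteq> h <# H"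
    proof
      fix k assume k: "k \<in> H"
      have "inv h \<otimes> k \<in> H" using hH k sgH by (simp add: subgroup.m_closed subgroup.m_inv_closed)
      moreover have "k = h \<otimes> (inv h \<otimes> k)" using hH k HC by (simp add: m_assoc[symmetric] subsetD)
      ultimately show "k \<in> h <# H" unfolding l_coset_def by blast
    qed
  qed
  then show "pr x = pr y" unfolding pr_def y using lcos_m_assoc[OF HC assms(1), of h] hH HC by auto
qed

lemma pr_mult: "h \<in> carrier G \<Longrightarrow> g \<in> carrier G \<Longrightarrow> h <# pr g = pr (h \<otimes> g)"
  unfolding pr_def using lcos_m_assoc HC by blast

lemma V_eq: "V = pr ` carrier G"
  unfolding V_def quot_vertices_def pr_def by simp

lemma E_iff: "E U U' \<longleftrightarrow> (\<exists>g\<in>carrier G. \<exists>s\<in>S. (U = pr g \<and> U' = pr (g \<otimes> s)) \<or> (U' = pr g \<and> U = pr (g \<otimes> s)))"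
  unfolding E_def cayley_edge_def pr_def by simp

lemma E_sym: "E U U' \<Longrightarrow> E U' U" unfolding E_iff by blast

lemma E_pr: "g \<in> carrier G \<Longrightarrow> s \<in> S \<Longrightarrow> E (pr g) (pr (g \<otimes> s))" unfolding E_iff by blast

lemma E_V: "E U U' \<Longrightarrow> U \<in> V \<and> U' \<in> V"
  unfolding E_iff V_eq using S_sub by blast

lemma E_trans: assumes "E U U'" "h \<in> carrier G" shows "E (h <# U) (h <# U')"
proof -
  obtain g s where gs: "g \<in> carrier G" "s \<in> S" "(U = pr g \<and> U' = pr (g \<otimes> s)) \<or> (U' = pr g \<and> U = pr (g \<otimes> s))"
    using assms(1) unfolding E_iff by blast
  have sc: "s \<in> carrier G" using gs(2) S_sub by blast
  have hg: "h \<otimes> g \<in> carrier G" using gs(1) assms(2) by simp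
  have e1: "h <# pr g = pr (h \<otimes> g)" using pr_mult gs(1) assms(2) by simp
  have e2: "h <# pr (g \<otimes> s) = pr ((h \<otimes> g) \<otimes> s)" using pr_mult gs(1) assms(2) sc by (simp add: m_assoc)
  have E0: "E (pr (h \<otimes> g)) (pr ((h \<otimes> g) \<otimes> s))" using E_pr[OF hg gs(2)] .
  from gs(3) show ?thesis
  proof
    assume "U = pr g \<and> U' = pr (g \<otimes> s)" then show ?thesis using e1 e2 E0 by simp
  next
    assume "U' = pr g \<and> U = pr (g \<otimes> s)" then show ?thesis using e1 e2 E_sym[OF E0] by simp
  qed
qed

lemma step_carrier: "step\<^sup>*\<^sup>* a b \<Longrightarrow> a \<in> carrier G \<Longrightarrow> b \<in> carrier G"
proof (induction rule: rtranclp_induct)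
  case base then show ?case by simp
next
  case (step y z)
  from step.hyps(2) obtain s where "s \<in> S" "z = y \<otimes> s" unfolding step_def by blast
  moreover have "s \<in> carrier G" using \<open>s \<in> S\<close> S_sub by blast
  ultimately show ?case using step.IH[OF step.prems] by simp
qed

lemma step_trans: assumes "step\<^sup>*\<^sup>* a b" "a \<in> carrier G" "h \<in> carrier G"
  shows "step\<^sup>*\<^sup>* (h \<otimes> a) (h \<otimes> b)"
  using assms
proof (induction rule: rtranclp_induct)
  case base then show ?case by simp
next
  case (step y z)
  from step.hyps(2) obtain s where "s \<in> S" "z = y \<otimes> s" "y \<in> carrier G" unfolding step_def by blast
  have hm: "h \<in> carrier G" using step.prems by blast
  have sc: "s \<in> carrier G" using \<open>s \<in> S\<close> S_sub by blast
  have e: "h \<otimes> z = (h \<otimes> y) \<otimes> s" using \<open>z = y \<otimes> s\<close> \<open>y \<in> carrier G\<close> hm sc by (simp add: m_assoc)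
  have "h \<otimes> y \<in> carrier G" using hm \<open>y \<in> carrier G\<close> by simp
  then have "step (h \<otimes> y) (h \<otimes> z)" unfolding step_def using \<open>s \<in> S\<close> e by blast
  with step.IH[OF step.prems] show ?case by (rule rtranclp.rtrancl_into_rtrancl)
qed

lemma reach: assumes "g \<in> carrier G" shows "step\<^sup>*\<^sup>* \<one> g"
proof -
  have "g \<in> generate G S" using assms gen by simp
  then show ?thesis
  proof (induction rule: generate.induct)
    case one then show ?case by simp
  next
    case (incl h)
    then have "h \<in> carrier G" using S_sub by blast
    then have "h = \<one> \<otimes> h" by simp
    then have "step \<one> h" unfolding step_def using incl by blast
    then show ?case by simp
  next
    case (inv h)
    then have "inv h \<in> carrier G" "inv h \<in> S" using S_sub S_inv by blast+
    then have "inv h = \<one> \<otimes> inv h" by simp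
    then have "step \<one> (inv h)" unfolding step_def using \<open>inv h \<in> S\<close> by blast
    then show ?case by simp
  next
    case (eng h1 h2)
    have c1: "h1 \<in> carrier G" using step_carrier[OF eng(3)] by simp
    have "step\<^sup>*\<^sup>* (h1 \<otimes> \<one>) (h1 \<otimes> h2)" using step_trans[OF eng(4) _ c1] by simp
    then have "step\<^sup>*\<^sup>* h1 (h1 \<otimes> h2)" using c1 by simp
    then show ?case by (rule rtranclp_trans[OF eng(3)])
  qed
qed

lemma reach_back: assumes "g \<in> carrier G" shows "step\<^sup>*\<^sup>* g \<one>"
  using step_trans[OF reach[of "inv g"] _ assms] assms by simp

lemma step_E: "step\<^sup>*\<^sup>* a b \<Longrightarrow> a \<in> carrier G \<Longrightarrow> E\<^sup>*\<^sup>* (pr a) (pr b)"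
proof (induction rule: rtranclp_induct)
  case base then show ?case by simp
next
  case (step y z)
  from step.hyps(2) obtain s where "s \<in> S" "z = y \<otimes> s" "y \<in> carrier G" unfolding step_def by blast
  then have "E (pr y) (pr z)" using E_pr by blast
  with step.IH[OF step.prems] show ?case by (rule rtranclp.rtrancl_into_rtrancl)
qed

lemma conn_sym: "conn U Z \<Longrightarrow> conn Z U"
  unfolding conn_def by (rule rtranclp_sym) (auto intro: E_sym)

lemma conn_trans: "conn U Z \<Longrightarrow> conn Z Y \<Longrightarrow> conn U Y"
  unfolding conn_def by (rule rtranclp_trans)

lemma conn_W: "conn U Z \<Longrightarrow> U \<in> W \<Longrightarrow> Z \<in> W"
  unfolding conn_def by (induction rule: rtranclp_induct) auto

lemma conn_edge: assumes "conn U Z" "U \<in> W" "Y \<in> W" "E Z Y" shows "conn U Y"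
proof -
  have "Z \<in> W" using conn_W assms by blast
  then have r: "(\<lambda>A C. A \<in> W \<and> C \<in> W \<and> E A C) Z Y" using assms by blast
  show ?thesis using rtranclp.rtrancl_into_rtrancl[OF assms(1)[unfolded conn_def] r] unfolding conn_def .
qed

lemma pr_carrier: "g \<in> carrier G \<Longrightarrow> pr g \<in> V" unfolding V_eq by blast

lemma adj: assumes "U \<in> W" shows "\<exists>x y. conn U x \<and> y \<in> pr ` B \<and> E x y"
proof -
  obtain g where g: "g \<in> carrier G" "U = pr g" using assms unfolding W_def V_eq by blast
  have "E\<^sup>*\<^sup>* U (pr \<one>)" using step_E[OF reach_back[OF g(1)] g(1)] g by simp
  moreover have "conn U U" unfolding conn_def by simp
  moreover have "\<not> conn U (pr \<one>)" using conn_W[of U "pr \<one>"] assms one_B unfolding W_def by blast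
  ultimately obtain y y' where yy: "conn U y" "E y y'" "\<not> conn U y'"
    using exit_path[of E U "pr \<one>" "conn U"] by blast
  have "y' \<in> V" using E_V yy(2) by blast
  moreover have "y' \<notin> W" using conn_edge[OF yy(1) assms _ yy(2)] yy(3) by blast
  ultimately have "y' \<in> pr ` B" unfolding W_def by blast
  then show ?thesis using yy by blast
qed

lemma T_V: "h \<in> carrier G \<Longrightarrow> Y \<in> V \<Longrightarrow> h <# Y \<in> V"
  unfolding V_eq using pr_mult by auto

lemma T_inv: "h \<in> carrier G \<Longrightarrow> Y \<in> V \<Longrightarrow> inv h <# (h <# Y) = Y"
  unfolding V_eq using pr_mult by (auto simp: m_assoc[symmetric])

lemma T_inv2: "h \<in> carrier G \<Longrightarrow> Y \<in> V \<Longrightarrow> h <# (inv h <# Y) = Y"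
  unfolding V_eq using pr_mult by (auto simp: m_assoc[symmetric])

lemma far_W: "far h \<Longrightarrow> b \<in> B \<Longrightarrow> pr (h \<otimes> b) \<in> W"
  unfolding far_def W_def using pr_carrier B_sub by (auto dest: subsetD)

lemma far_inv: assumes "far h" shows "far (inv h)"
proof -
  have h: "h \<in> carrier G" using assms far_def by blast
  { fix b b' assume bb: "b \<in> B" "b' \<in> B" "pr (inv h \<otimes> b) = pr b'"
    then have "h <# pr (inv h \<otimes> b) = h <# pr b'" by simp
    then have "pr b = pr (h \<otimes> b')" using h bb B_sub pr_mult
      by (metis inv_closed m_closed subsetD T_inv2 pr_carrier)
    then have False using assms bb unfolding far_def by (metis imageI) }
  then show ?thesis unfolding far_def using h by blast
qed

lemma far_conn: assumes "far h" "b \<in> B" shows "conn (pr h) (pr (h \<otimes> b))"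
proof -
  have h: "h \<in> carrier G" using assms far_def by blast
  have "(\<lambda>x y. x \<in> B \<and> y \<in> B \<and> (\<exists>s\<in>S. y = x \<otimes> s))\<^sup>*\<^sup>* \<one> b" using B_conn assms by blast
  then have "conn (pr (h \<otimes> \<one>)) (pr (h \<otimes> b))" unfolding conn_def
  proof (rule rtranclp_map[where f = "\<lambda>x. pr (h \<otimes> x)"])
    fix x y assume "x \<in> B \<and> y \<in> B \<and> (\<exists>s\<in>S. y = x \<otimes> s)"
    then obtain s where "x \<in> B" "y \<in> B" "s \<in> S" "y = x \<otimes> s" by blast
    moreover have "h \<otimes> (x \<otimes> s) = (h \<otimes> x) \<otimes> s" using calculation h B_sub S_sub by (simp add: m_assoc subsetD)
    ultimately show "pr (h \<otimes> x) \<in> W \<and> pr (h \<otimes> y) \<in> W \<and> E (pr (h \<otimes> x)) (pr (h \<otimes> y))"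
      using far_W[OF assms(1)] E_pr h B_sub by (metis m_closed subsetD)
  qed
  then show ?thesis using h by simp
qed


lemma W_V: "W \<subseteq> V" unfolding W_def by blast

lemma T_W: assumes "far h" "Y \<in> W" "\<not> conn (pr h) Y" shows "inv h <# Y \<in> W"
proof -
  have hc: "h \<in> carrier G" using assms far_def by blast
  obtain y where y: "y \<in> carrier G" "Y = pr y" using assms(2) W_V unfolding V_eq by blast
  have e: "inv h <# Y = pr (inv h \<otimes> y)" using y hc pr_mult by simp
  have "inv h <# Y \<notin> pr ` B"
  proof
    assume "inv h <# Y \<in> pr ` B"
    then obtain b where b: "b \<in> B" "inv h <# Y = pr b" by blast
    have "Y = h <# (inv h <# Y)" using T_inv2[OF hc] y pr_carrier by simp
    also have "\<dots> = pr (h \<otimes> b)" using b hc B_sub pr_mult by (simp add: subsetD)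
    finally have "conn (pr h) Y" using far_conn[OF assms(1) b(1)] by simp
    then show False using assms(3) by simp
  qed
  moreover have "inv h <# Y \<in> V" using e y hc pr_carrier by simp
  ultimately show ?thesis unfolding W_def by blast
qed

lemma L0: assumes "far h" "U \<in> W" "\<not> conn (pr h) U" "conn U Z"
  shows "conn (inv h <# U) (inv h <# Z)"
proof -
  have hc: "h \<in> carrier G" using assms far_def by blast
  define Xs where "Xs = {Y \<in> W. \<not> conn (pr h) Y}"
  have inX: "\<And>Y. conn U Y \<Longrightarrow> Y \<in> Xs"
  proof -
    fix Y assume cY: "conn U Y"
    have "Y \<in> W" using conn_W[OF cY assms(2)] .
    moreover have "\<not> conn (pr h) Y"
    proof
      assume "conn (pr h) Y"
      then have "conn (pr h) U" using conn_trans conn_sym[OF cY] by blast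
      then show False using assms(3) by simp
    qed
    ultimately show "Y \<in> Xs" unfolding Xs_def by blast
  qed
  have c1: "(\<lambda>A C. A \<in> Xs \<and> C \<in> Xs \<and> E A C)\<^sup>*\<^sup>* U Z"
    using assms(4)[unfolded conn_def]
  proof (induction rule: rtranclp_induct)
    case base then show ?case by simp
  next
    case (step Y Y')
    have "conn U Y" using step.hyps(1) unfolding conn_def .
    moreover have "conn U Y'" using step.hyps unfolding conn_def by (rule rtranclp.rtrancl_into_rtrancl)
    ultimately have "Y \<in> Xs \<and> Y' \<in> Xs \<and> E Y Y'" using inX step.hyps(2) by blast
    then show ?case using step.IH by (simp add: rtranclp.rtrancl_into_rtrancl)
  qed
  show ?thesis unfolding conn_def
  proof (rule rtranclp_map[OF c1, where f = "\<lambda>Y. inv h <# Y"])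
    fix A C assume "A \<in> Xs \<and> C \<in> Xs \<and> E A C"
    then show "inv h <# A \<in> W \<and> inv h <# C \<in> W \<and> E (inv h <# A) (inv h <# C)"
      using T_W[OF assms(1)] E_trans hc unfolding Xs_def by auto
  qed
qed

lemma L1: assumes "far h" "U \<in> W" "U' \<in> W" "\<And>Y. conn U' Y \<Longrightarrow> conn U (h <# Y)"
  shows "conn (pr h) U"
proof -
  have hc: "h \<in> carrier G" using assms far_def by blast
  obtain x y where xy: "conn U' x" "y \<in> pr ` B" "E x y" using adj[OF assms(3)] by blast
  obtain b where b: "b \<in> B" "y = pr b" using xy(2) by blast
  have c1: "conn U (h <# x)" using assms(4) xy(1) by blast
  have hy: "h <# y = pr (h \<otimes> b)" using b hc B_sub pr_mult by (simp add: subsetD)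
  have "E (h <# x) (h <# y)" using E_trans[OF xy(3) hc] .
  then have "conn U (h <# y)" using conn_edge[OF c1 assms(2)] far_W[OF assms(1) b(1)] hy by simp
  moreover have "conn (pr h) (h <# y)" using far_conn[OF assms(1) b(1)] hy by simp
  ultimately show ?thesis using conn_sym conn_trans by blast
qed

lemma pr_one: "h \<in> carrier G \<Longrightarrow> pr (h \<otimes> \<one>) = pr h" by simp

lemma far_W1: "far h \<Longrightarrow> pr h \<in> W"
  using far_W[of h \<one>] one_B unfolding far_def by simp

lemma L: assumes "far h" "U \<in> W" "\<not> conn (pr h) U" "conn U Z"
  shows "\<exists>Y. conn (pr (inv h)) Y \<and> Z = h <# Y"
proof -
  have hc: "h \<in> carrier G" using assms far_def by blast
  have fi: "far (inv h)" using far_inv[OF assms(1)] .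
  define U' where "U' = inv h <# U"
  have U'W: "U' \<in> W" unfolding U'_def using T_W[OF assms(1-3)] .
  have cZ: "conn U' (inv h <# Z)" unfolding U'_def using L0[OF assms] .
  have key: "conn (pr (inv h)) U'"
  proof (rule ccontr)
    assume nc: "\<not> conn (pr (inv h)) U'"
    have "\<And>Y. conn U' Y \<Longrightarrow> conn U (h <# Y)"
    proof -
      fix Y assume "conn U' Y"
      then have "conn (inv (inv h) <# U') (inv (inv h) <# Y)" using L0[OF fi U'W nc] by blast
      moreover have "inv (inv h) <# U' = U" unfolding U'_def using hc T_inv2 assms(2) W_V by auto
      ultimately show "conn U (h <# Y)" using hc by simp
    qed
    then have "conn (pr h) U" using L1[OF assms(1) assms(2) U'W] by blast
    then show False using assms(3) by simp
  qed
  have "Z \<in> V" using conn_W[OF assms(4) assms(2)] W_V by blast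
  then have "Z = h <# (inv h <# Z)" using T_inv2 hc by simp
  moreover have "conn (pr (inv h)) (inv h <# Z)" using key cZ conn_trans by blast
  ultimately show ?thesis by blast
qed

lemma comp_fin: "finite {Y. conn U Y}" if "U \<in> W" for U
proof -
  have "{Y. conn U Y} \<subseteq> V" using conn_W[OF _ that] W_V by blast
  then show ?thesis using finV V_def finite_subset by metis
qed

lemma a_c: assumes "far h" shows "conn (pr h) (pr (inv h))"
proof (rule ccontr)
  assume nc: "\<not> conn (pr h) (pr (inv h))"
  have hc: "h \<in> carrier G" using assms far_def by blast
  define U where "U = pr (inv h)"
  have UW: "U \<in> W" unfolding U_def using far_W1[OF far_inv[OF assms]] .
  define K where "K = {Y. conn U Y}"
  have fK: "finite K" unfolding K_def using comp_fin[OF UW] .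
  have sub: "K \<subseteq> (\<lambda>Y. h <# Y) ` K"
  proof
    fix Z assume "Z \<in> K"
    then obtain Y where "conn (pr (inv h)) Y" "Z = h <# Y" using L[OF assms UW nc[folded U_def]] K_def by blast
    then show "Z \<in> (\<lambda>Y. h <# Y) ` K" unfolding K_def U_def by blast
  qed
  have "card K \<le> card ((\<lambda>Y. h <# Y) ` K)" using card_mono[OF finite_imageI[OF fK] sub] .
  moreover have "card ((\<lambda>Y. h <# Y) ` K) \<le> card K" using card_image_le[OF fK] .
  ultimately have "K = (\<lambda>Y. h <# Y) ` K" using card_subset_eq[OF finite_imageI[OF fK] sub] by simp
  then have "\<And>Y. conn U Y \<Longrightarrow> conn U (h <# Y)" unfolding K_def by blast
  then have "conn (pr h) U" using L1[OF assms UW UW] by blast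
  then show False using nc U_def by simp
qed

lemma far_far: assumes "far h1" "far h2" shows "conn (pr h1) (pr h2)"
proof (rule ccontr)
  assume n12: "\<not> conn (pr h1) (pr h2)"
  then have n21: "\<not> conn (pr h2) (pr h1)" using conn_sym by blast
  have W1: "pr h1 \<in> W" and W2: "pr h2 \<in> W" using far_W1 assms by auto
  define K1 where "K1 = {Y. conn (pr h1) Y}"
  define K2 where "K2 = {Y. conn (pr h2) Y}"
  have f1: "finite K1" and f2: "finite K2" unfolding K1_def K2_def using comp_fin W1 W2 by auto
  have s2: "K2 \<subseteq> (\<lambda>Y. h1 <# Y) ` K1"
  proof
    fix Z assume "Z \<in> K2"
    then obtain Y where "conn (pr (inv h1)) Y" "Z = h1 <# Y" using L[OF assms(1) W2 n12] K2_def by blast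
    moreover have "conn (pr h1) Y" using calculation(1) a_c[OF assms(1)] conn_trans by blast
    ultimately show "Z \<in> (\<lambda>Y. h1 <# Y) ` K1" unfolding K1_def by blast
  qed
  have s1: "K1 \<subseteq> (\<lambda>Y. h2 <# Y) ` K2"
  proof
    fix Z assume "Z \<in> K1"
    then obtain Y where "conn (pr (inv h2)) Y" "Z = h2 <# Y" using L[OF assms(2) W1 n21] K1_def by blast
    moreover have "conn (pr h2) Y" using calculation(1) a_c[OF assms(2)] conn_trans by blast
    ultimately show "Z \<in> (\<lambda>Y. h2 <# Y) ` K2" unfolding K2_def by blast
  qed
  have "card K2 \<le> card ((\<lambda>Y. h1 <# Y) ` K1)" using card_mono[OF finite_imageI[OF f1] s2] .
  moreover have "card ((\<lambda>Y. h1 <# Y) ` K1) \<le> card K1" using card_image_le[OF f1] .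
  moreover have "card K1 \<le> card ((\<lambda>Y. h2 <# Y) ` K2)" using card_mono[OF finite_imageI[OF f2] s1] .
  moreover have "card ((\<lambda>Y. h2 <# Y) ` K2) \<le> card K2" using card_image_le[OF f2] .
  ultimately have "K2 = (\<lambda>Y. h1 <# Y) ` K1" using card_subset_eq[OF finite_imageI[OF f1] s2] by simp
  then have "\<And>Y. conn (pr h1) Y \<Longrightarrow> conn (pr h2) (h1 <# Y)" unfolding K1_def K2_def by blast
  then have "conn (pr h1) (pr h2)" using L1[OF assms(1) W2 W1] by blast
  then show False using n12 by simp
qed


lemma conj_lemma: assumes g: "g \<in> carrier G" and b: "b \<in> B" and b': "b' \<in> B"
  and e: "pr (g \<otimes> b) = pr b'" shows "pr g = pr (b' \<otimes> inv b)"
proof -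
  have bc: "b \<in> carrier G" "b' \<in> carrier G" using b b' B_sub by auto
  have "inv (g \<otimes> b) \<otimes> b' \<in> H" using e pr_eq g bc by simp
  then have "b \<otimes> (inv (g \<otimes> b) \<otimes> b') \<otimes> inv b \<in> H"
    using normal.inv_op_closed2[OF nH bc(1)] by blast
  moreover have "b \<otimes> (inv (g \<otimes> b) \<otimes> b') \<otimes> inv b = inv g \<otimes> (b' \<otimes> inv b)"
    using g bc by (simp add: inv_mult_group m_assoc[symmetric])
  ultimately show ?thesis using pr_eq g bc by simp
qed

lemma reach_far: assumes "U \<in> W" shows "\<exists>h. far h \<and> conn U (pr h)"
proof (rule ccontr)
  assume nf: "\<not> (\<exists>h. far h \<and> conn U (pr h))"
  define D where "D = (\<lambda>(b,b'). b' \<otimes> inv b) ` (B \<times> B)"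
  define Es where "Es = (\<lambda>(b,b',s). b' \<otimes> inv b \<otimes> s) ` (B \<times> B \<times> insert \<one> S)"
  have DC: "D \<subseteq> carrier G" unfolding D_def using B_sub by auto
  have EC: "Es \<subseteq> carrier G" unfolding Es_def using B_sub S_sub by auto
  have fD: "finite D" unfolding D_def using finB by simp
  have DE: "\<And>x. x \<in> D \<Longrightarrow> x \<in> Es"
  proof -
    fix x assume "x \<in> D"
    then obtain b b' where "b \<in> B" "b' \<in> B" "x = b' \<otimes> inv b" unfolding D_def by auto
    moreover have "x = b' \<otimes> inv b \<otimes> \<one>" using calculation B_sub by (auto simp: subsetD)
    ultimately show "x \<in> Es" unfolding Es_def by (intro rev_image_eqI[where x="(b,b',\<one>)"]) auto
  qed
  have DSE: "\<And>x s. x \<in> D \<Longrightarrow> s \<in> S \<Longrightarrow> x \<otimes> s \<in> Es"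
  proof -
    fix x s assume "x \<in> D" "s \<in> S"
    then obtain b b' where "b \<in> B" "b' \<in> B" "x = b' \<otimes> inv b" unfolding D_def by auto
    then show "x \<otimes> s \<in> Es" unfolding Es_def using \<open>s \<in> S\<close> by (intro rev_image_eqI[where x="(b,b',s)"]) auto
  qed
  have BE: "\<And>b. b \<in> B \<Longrightarrow> b \<in> Es"
  proof -
    fix b assume "b \<in> B"
    then have "b = b \<otimes> inv \<one> \<otimes> \<one>" using B_sub by (auto simp: subsetD)
    then show "b \<in> Es" unfolding Es_def using \<open>b \<in> B\<close> one_B by (intro rev_image_eqI[where x="(\<one>,b,\<one>)"]) auto
  qed
  have injE: "\<And>x y. x \<in> Es \<Longrightarrow> y \<in> Es \<Longrightarrow> pr x = pr y \<Longrightarrow> x = y"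
  proof -
    fix x y assume xy: "x \<in> Es" "y \<in> Es" "pr x = pr y"
    then have "inv x \<otimes> y \<in> H" using pr_eq EC by blast
    then show "x = y" by (rule inj[OF xy(1)[unfolded Es_def] xy(2)[unfolded Es_def]])
  qed
  have inD: "\<And>Z. conn U Z \<Longrightarrow> \<exists>d\<in>D. Z = pr d"
  proof -
    fix Z assume cZ: "conn U Z"
    have "Z \<in> V" using conn_W[OF cZ assms] W_V by blast
    then obtain g where g: "g \<in> carrier G" "Z = pr g" unfolding V_eq by blast
    then have "\<not> far g" using nf cZ by blast
    then obtain b where b: "b \<in> B" "pr (g \<otimes> b) \<in> pr ` B" using g unfolding far_def by blast
    then obtain b' where b': "b' \<in> B" "pr (g \<otimes> b) = pr b'" by blast
    have "pr g = pr (b' \<otimes> inv b)" using conj_lemma[OF g(1) b(1) b'] .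
    moreover have "b' \<otimes> inv b \<in> D" unfolding D_def using b b' by (intro rev_image_eqI[where x="(b,b')"]) auto
    ultimately show "\<exists>d\<in>D. Z = pr d" using g by blast
  qed
  define K where "K = {x \<in> D. conn U (pr x)}"
  have fK: "finite K" unfolding K_def using fD by simp
  have KC: "K \<subseteq> carrier G" unfolding K_def using DC by blast
  have KB: "K \<inter> B = {}"
  proof -
    { fix x assume "x \<in> K" "x \<in> B"
      then have "pr x \<in> W" using conn_W[OF _ assms] unfolding K_def by blast
      then have False using \<open>x \<in> B\<close> unfolding W_def by blast }
    then show ?thesis by blast
  qed
  have Kcl: "\<forall>x\<in>K. \<forall>s\<in>S. x \<otimes> s \<in> K \<union> B"
  proof (intro ballI)
    fix x s assume x: "x \<in> K" and s: "s \<in> S"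
    have xD: "x \<in> D" and cx: "conn U (pr x)" using x unfolding K_def by auto
    have xc: "x \<in> carrier G" using xD DC by blast
    have xsc: "x \<otimes> s \<in> carrier G" using xc s S_sub by blast
    have Ex: "E (pr x) (pr (x \<otimes> s))" using E_pr[OF xc s] .
    show "x \<otimes> s \<in> K \<union> B"
    proof (cases "pr (x \<otimes> s) \<in> W")
      case True
      have c2: "conn U (pr (x \<otimes> s))" using conn_edge[OF cx assms True Ex] .
      then obtain d where d: "d \<in> D" "pr (x \<otimes> s) = pr d" using inD by blast
      have "x \<otimes> s = d" using injE[OF DSE[OF xD s] DE[OF d(1)] d(2)] .
      then show ?thesis using c2 d(1) unfolding K_def by blast
    next
      case False
      then have "pr (x \<otimes> s) \<in> pr ` B" using pr_carrier[OF xsc] unfolding W_def by blast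
      then obtain b where b: "b \<in> B" "pr (x \<otimes> s) = pr b" by blast
      have "x \<otimes> s = b" using injE[OF DSE[OF xD s] BE[OF b(1)] b(2)] .
      then show ?thesis using b(1) by blast
    qed
  qed
  have "K = {}" using B_closed[OF fK KC KB Kcl] .
  moreover have "conn U U" unfolding conn_def by simp
  then obtain d where "d \<in> D" "U = pr d" using inD by blast
  then have "d \<in> K" unfolding K_def using \<open>conn U U\<close> by simp
  ultimately show False by blast
qed

lemma W_connected: "cayley_connected G H S (quot_vertices G H - (\<lambda>g. g <# H) ` B)"
proof -
  have eq: "(\<lambda>g. g <# H) = pr" by (rule ext) (simp add: pr_def)
  have "\<forall>U\<in>W. \<forall>Z\<in>W. conn U Z"
  proof (intro ballI)
    fix U Z assume "U \<in> W" "Z \<in> W"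
    obtain h1 where "far h1" "conn U (pr h1)" using reach_far[OF \<open>U \<in> W\<close>] by blast
    moreover obtain h2 where "far h2" "conn Z (pr h2)" using reach_far[OF \<open>Z \<in> W\<close>] by blast
    ultimately show "conn U Z" using far_far conn_sym conn_trans by metis
  qed
  then show ?thesis unfolding cayley_connected_def eq W_def[symmetric] V_def[symmetric]
    unfolding conn_def E_def V_def by simp
qed

end

lemma finite_bound:
  assumes "finite A" "\<forall>a\<in>A. \<exists>k::nat. P a k"
  shows "\<exists>R. \<forall>a\<in>A. \<exists>k\<le>R. P a k"
  using assms
proof (induction rule: finite_induct)
  case empty then show ?case by simp
next
  case (insert x F)
  then obtain R where R: "\<forall>a\<in>F. \<exists>k\<le>R. P a k" by blast
  obtain k where k: "P x k" using insert by blast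
  have "\<forall>a\<in>insert x F. \<exists>k'\<le>max R k. P a k'"
    using R k by (metis insert_iff max.cobounded1 max.cobounded2 order_trans)
  then show ?case by blast
qed

locale cg = group G for G (structure) +
  fixes S
  assumes S_sub: "S \<subseteq> carrier G"
    and S_inv: "\<And>s. s \<in> S \<Longrightarrow> inv s \<in> S"
    and gen: "generate G S = carrier G"
    and finS: "finite S"
begin

definition st where "st x y \<longleftrightarrow> x \<in> carrier G \<and> (\<exists>s\<in>S. y = x \<otimes> s)"

lemma st_carrier: "st\<^sup>*\<^sup>* a b \<Longrightarrow> a \<in> carrier G \<Longrightarrow> b \<in> carrier G"
proof (induction rule: rtranclp_induct)
  case base then show ?case by simp
next
  case (step y z)
  from step.hyps(2) obtain s where "s \<in> S" "z = y \<otimes> s" unfolding st_def by blast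
  moreover have "s \<in> carrier G" using \<open>s \<in> S\<close> S_sub by blast
  ultimately show ?case using step.IH[OF step.prems] by simp
qed

lemma st_trans: assumes "st\<^sup>*\<^sup>* a b" "a \<in> carrier G" "h \<in> carrier G"
  shows "st\<^sup>*\<^sup>* (h \<otimes> a) (h \<otimes> b)"
  using assms
proof (induction rule: rtranclp_induct)
  case base then show ?case by simp
next
  case (step y z)
  from step.hyps(2) obtain s where "s \<in> S" "z = y \<otimes> s" "y \<in> carrier G" unfolding st_def by blast
  have hm: "h \<in> carrier G" using step.prems by blast
  have sc: "s \<in> carrier G" using \<open>s \<in> S\<close> S_sub by blast
  have e: "h \<otimes> z = (h \<otimes> y) \<otimes> s" using \<open>z = y \<otimes> s\<close> \<open>y \<in> carrier G\<close> hm sc by (simp add: m_assoc)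
  have "h \<otimes> y \<in> carrier G" using hm \<open>y \<in> carrier G\<close> by simp
  then have "st (h \<otimes> y) (h \<otimes> z)" unfolding st_def using \<open>s \<in> S\<close> e by blast
  with step.IH[OF step.prems] show ?case by (rule rtranclp.rtrancl_into_rtrancl)
qed

lemma st_reach: assumes "g \<in> carrier G" shows "st\<^sup>*\<^sup>* \<one> g"
proof -
  have "g \<in> generate G S" using assms gen by simp
  then show ?thesis
  proof (induction rule: generate.induct)
    case one then show ?case by simp
  next
    case (incl h)
    then have "h \<in> carrier G" using S_sub by blast
    then have "h = \<one> \<otimes> h" by simp
    then have "st \<one> h" unfolding st_def using incl by blast
    then show ?case by simp
  next
    case (inv h)
    then have "inv h \<in> carrier G" "inv h \<in> S" using S_sub S_inv by blast+
    then have "inv h = \<one> \<otimes> inv h" by simp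
    then have "st \<one> (inv h)" unfolding st_def using \<open>inv h \<in> S\<close> by blast
    then show ?case by simp
  next
    case (eng h1 h2)
    have c1: "h1 \<in> carrier G" using st_carrier[OF eng(3)] by simp
    have "st\<^sup>*\<^sup>* (h1 \<otimes> \<one>) (h1 \<otimes> h2)" using st_trans[OF eng(4) _ c1] by simp
    then have "st\<^sup>*\<^sup>* h1 (h1 \<otimes> h2)" using c1 by simp
    then show ?case by (rule rtranclp_trans[OF eng(3)])
  qed
qed

lemma st_back: assumes "g \<in> carrier G" shows "st\<^sup>*\<^sup>* g \<one>"
  using st_trans[OF st_reach[of "inv g"] _ assms] assms by simp

lemma st_sym: assumes "st x y" shows "st y x"
proof -
  obtain s where s: "s \<in> S" "y = x \<otimes> s" "x \<in> carrier G" using assms st_def by blast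
  have sc: "s \<in> carrier G" using s S_sub by blast
  have "x = y \<otimes> inv s" using s sc by (simp add: m_assoc)
  moreover have "y \<in> carrier G" using s sc by simp
  ultimately show ?thesis unfolding st_def using S_inv[OF s(1)] by blast
qed

lemma level_fin: "finite {g. (st ^^ k) \<one> g}"
proof (induction k)
  case 0 then show ?case by simp
next
  case (Suc k)
  have "{g. (st ^^ Suc k) \<one> g} \<subseteq> (\<lambda>(y,s). y \<otimes> s) ` ({y. (st ^^ k) \<one> y} \<times> S)"
  proof
    fix g assume "g \<in> {g. (st ^^ Suc k) \<one> g}"
    then obtain y where "(st ^^ k) \<one> y" "st y g" by (auto elim: relpowp_Suc_E)
    then obtain s where "s \<in> S" "g = y \<otimes> s" unfolding st_def by blast
    then show "g \<in> (\<lambda>(y,s). y \<otimes> s) ` ({y. (st ^^ k) \<one> y} \<times> S)"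
      using \<open>(st ^^ k) \<one> y\<close> by (intro rev_image_eqI[where x="(y,s)"]) auto
  qed
  moreover have "finite ((\<lambda>(y,s). y \<otimes> s) ` ({y. (st ^^ k) \<one> y} \<times> S))"
    using Suc finS by simp
  ultimately show ?case using finite_subset by blast
qed


lemma exists_B:
  assumes "finite A" "A \<subseteq> carrier G"
  shows "\<exists>B. finite B \<and> A \<subseteq> B \<and> B \<subseteq> carrier G \<and> \<one> \<in> B \<and>
     (\<forall>b\<in>B. (\<lambda>x y. x \<in> B \<and> y \<in> B \<and> (\<exists>s\<in>S. y = x \<otimes> s))\<^sup>*\<^sup>* \<one> b) \<and>
     (\<forall>K. finite K \<longrightarrow> K \<subseteq> carrier G \<longrightarrow> K \<inter> B = {} \<longrightarrow> (\<forall>x\<in>K. \<forall>s\<in>S. x \<otimes> s \<in> K \<union> B) \<longrightarrow> K = {})"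
proof -
  have "\<forall>a\<in>A. \<exists>k. (st ^^ k) \<one> a"
  proof
    fix a assume "a \<in> A"
    then have "a \<in> carrier G" using assms(2) by blast
    from rtranclp_imp_relpowp[OF st_reach[OF this]] show "\<exists>k. (st ^^ k) \<one> a" .
  qed
  then obtain R where R: "\<forall>a\<in>A. \<exists>k\<le>R. (st ^^ k) \<one> a" using finite_bound[OF assms(1), of "\<lambda>a k. (st ^^ k) \<one> a"] by blast
  define B0 where "B0 = {g. \<exists>k\<le>R. (st ^^ k) \<one> g}"
  have B0_eq: "B0 = (\<Union>k\<in>{..R}. {g. (st ^^ k) \<one> g})" unfolding B0_def by auto
  have finB0: "finite B0" unfolding B0_eq using level_fin by auto
  have AB0: "A \<subseteq> B0" unfolding B0_def using R by blast
  have B0C: "B0 \<subseteq> carrier G"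
  proof
    fix g assume "g \<in> B0"
    then obtain k where "(st ^^ k) \<one> g" unfolding B0_def by blast
    then show "g \<in> carrier G" using st_carrier[OF relpowp_imp_rtranclp] by simp
  qed
  have oneB0: "\<one> \<in> B0" unfolding B0_def by (intro CollectI exI[of _ 0]) simp
  define relB where "relB = (\<lambda>Xr x y. x \<in> Xr \<and> y \<in> Xr \<and> (\<exists>s\<in>S. y = x \<otimes> (s::'a)))"
  have aux: "\<And>g. (st ^^ k) \<one> g \<Longrightarrow> k \<le> R \<Longrightarrow> (relB B0)\<^sup>*\<^sup>* \<one> g" for k
  proof (induction k)
    case 0 then show ?case by simp
  next
    case (Suc k)
    from Suc.prems(1) obtain y where y: "(st ^^ k) \<one> y" "st y g" by (auto elim: relpowp_Suc_E)
    have yB: "y \<in> B0" unfolding B0_def using y(1) Suc.prems(2) by (intro CollectI exI[of _ k]) simp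
    have gB: "g \<in> B0" unfolding B0_def using Suc.prems by (intro CollectI exI[of _ "Suc k"]) simp
    have "relB B0 y g" unfolding relB_def using yB gB y(2) st_def by blast
    with Suc.IH[OF y(1)] Suc.prems(2) show ?case by (simp add: rtranclp.rtrancl_into_rtrancl)
  qed
  have B0conn: "\<And>g. g \<in> B0 \<Longrightarrow> (relB B0)\<^sup>*\<^sup>* \<one> g" using aux unfolding B0_def by blast
  define Fam where "Fam = {K. finite K \<and> K \<subseteq> carrier G \<and> K \<inter> B0 = {} \<and> (\<forall>x\<in>K. \<forall>s\<in>S. x \<otimes> s \<in> K \<union> B0)}"
  define B where "B = B0 \<union> \<Union>Fam"
  define out where "out = (\<lambda>a b. a \<notin> B0 \<and> b \<notin> B0 \<and> st a b)"
  have stay: "\<And>K a c. K \<in> Fam \<Longrightarrow> out\<^sup>*\<^sup>* a c \<Longrightarrow> a \<in> K \<Longrightarrow> c \<in> K"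
  proof -
    fix K a c assume K: "K \<in> Fam" and p: "out\<^sup>*\<^sup>* a c" and a: "a \<in> K"
    from p a show "c \<in> K"
    proof (induction rule: rtranclp_induct)
      case base then show ?case by simp
    next
      case (step y z)
      have "y \<in> K" using step.IH step.prems by simp
      moreover obtain s where "s \<in> S" "z = y \<otimes> s" "z \<notin> B0" using step.hyps(2) unfolding out_def st_def by blast
      ultimately show ?case using K unfolding Fam_def by blast
    qed
  qed
  have stayB: "\<And>K a c. K \<in> Fam \<Longrightarrow> out\<^sup>*\<^sup>* a c \<Longrightarrow> a \<in> K \<Longrightarrow> (relB B)\<^sup>*\<^sup>* a c"
  proof -
    fix K a c assume K: "K \<in> Fam" and p: "out\<^sup>*\<^sup>* a c" and a: "a \<in> K"
    from p a show "(relB B)\<^sup>*\<^sup>* a c"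
    proof (induction rule: rtranclp_induct)
      case base then show ?case by simp
    next
      case (step y z)
      have "y \<in> K" using stay[OF K step.hyps(1) step.prems] .
      moreover have "z \<in> K" using stay[OF K _ step.prems] step.hyps rtranclp.rtrancl_into_rtrancl by metis
      moreover obtain s where "s \<in> S" "z = y \<otimes> s" using step.hyps(2) unfolding out_def st_def by blast
      ultimately have "relB B y z" unfolding relB_def B_def using K by blast
      with step.IH[OF step.prems] show ?case by (rule rtranclp.rtrancl_into_rtrancl)
    qed
  qed
  have out_sym: "\<And>a b. out a b \<Longrightarrow> out b a" unfolding out_def using st_sym by blast
  have keyexit: "\<And>K x. K \<in> Fam \<Longrightarrow> x \<in> K \<Longrightarrow> \<exists>y y'. out\<^sup>*\<^sup>* x y \<and> st y y' \<and> y' \<in> B0"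
  proof -
    fix K x assume K: "K \<in> Fam" and x: "x \<in> K"
    have xc: "x \<in> carrier G" using K x unfolding Fam_def by blast
    have xB0: "x \<notin> B0" using K x unfolding Fam_def by blast
    obtain y y' where "(\<lambda>a b. a \<notin> B0 \<and> b \<notin> B0 \<and> st a b)\<^sup>*\<^sup>* x y" "st y y'" "\<not> y' \<notin> B0"
      using exit_path[of st x \<one> "\<lambda>z. z \<notin> B0", OF st_back[OF xc] xB0] oneB0 by blast
    then show "\<exists>y y'. out\<^sup>*\<^sup>* x y \<and> st y y' \<and> y' \<in> B0" unfolding out_def by blast
  qed
  define Nb where "Nb = (\<lambda>(y',s). y' \<otimes> inv s) ` (B0 \<times> S)"
  have finNb: "finite Nb" unfolding Nb_def using finB0 finS by simp
  have UFsub: "\<Union>Fam \<subseteq> (\<Union>y\<in>{y\<in>Nb. finite {z. out\<^sup>*\<^sup>* y z}}. {z. out\<^sup>*\<^sup>* y z})"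
  proof
    fix x assume "x \<in> \<Union>Fam"
    then obtain K where K: "K \<in> Fam" "x \<in> K" by blast
    obtain y y' where yy: "out\<^sup>*\<^sup>* x y" "st y y'" "y' \<in> B0" using keyexit[OF K] by blast
    have yK: "y \<in> K" using stay[OF K(1) yy(1) K(2)] .
    obtain s where s: "s \<in> S" "y' = y \<otimes> s" "y \<in> carrier G" using yy(2) st_def by blast
    have sc: "s \<in> carrier G" using s S_sub by blast
    have "y = y' \<otimes> inv s" using s sc by (simp add: m_assoc)
    then have yNb: "y \<in> Nb" unfolding Nb_def using yy(3) s(1) by (intro rev_image_eqI[where x="(y',s)"]) auto
    have "{z. out\<^sup>*\<^sup>* y z} \<subseteq> K" using stay[OF K(1) _ yK] by blast
    then have "finite {z. out\<^sup>*\<^sup>* y z}" using K(1) unfolding Fam_def using finite_subset by blast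
    moreover have "out\<^sup>*\<^sup>* y x" using rtranclp_sym[OF yy(1) out_sym] .
    ultimately show "x \<in> (\<Union>y\<in>{y\<in>Nb. finite {z. out\<^sup>*\<^sup>* y z}}. {z. out\<^sup>*\<^sup>* y z})" using yNb by blast
  qed
  have finUF: "finite (\<Union>Fam)"
    by (rule finite_subset[OF UFsub]) (use finNb in auto)
  have finB: "finite B" unfolding B_def using finB0 finUF by simp
  have BC: "B \<subseteq> carrier G" unfolding B_def Fam_def using B0C by blast
  have oneB: "\<one> \<in> B" unfolding B_def using oneB0 by blast
  have AB: "A \<subseteq> B" unfolding B_def using AB0 by blast
  have Bconn: "\<forall>b\<in>B. (relB B)\<^sup>*\<^sup>* \<one> b"
  proof
    fix b assume "b \<in> B"
    show "(relB B)\<^sup>*\<^sup>* \<one> b"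
    proof (cases "b \<in> B0")
      case True
      show ?thesis
        by (rule rtranclp_mono_restr[OF B0conn[OF True]]) (auto simp: relB_def B_def)
    next
      case False
      then obtain K where K: "K \<in> Fam" "b \<in> K" using \<open>b \<in> B\<close> unfolding B_def by blast
      obtain y y' where yy: "out\<^sup>*\<^sup>* b y" "st y y'" "y' \<in> B0" using keyexit[OF K] by blast
      have yK: "y \<in> K" using stay[OF K(1) yy(1) K(2)] .
      have p1: "(relB B)\<^sup>*\<^sup>* \<one> y'"
        by (rule rtranclp_mono_restr[OF B0conn[OF yy(3)]]) (auto simp: relB_def B_def)
      obtain s where s: "s \<in> S" "y' = y \<otimes> s" "y \<in> carrier G" using yy(2) st_def by blast
      have sc: "s \<in> carrier G" using s S_sub by blast
      have "y = y' \<otimes> inv s" using s sc by (simp add: m_assoc)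
      then have p2: "relB B y' y" unfolding relB_def B_def using yy(3) yK K(1) S_inv[OF s(1)] by blast
      have p3: "(relB B)\<^sup>*\<^sup>* y b" using stayB[OF K(1) rtranclp_sym[OF yy(1) out_sym] yK] .
      show ?thesis using p1 p2 p3 by (meson rtranclp.rtrancl_into_rtrancl rtranclp_trans)
    qed
  qed
  have Bclosed: "\<forall>K. finite K \<longrightarrow> K \<subseteq> carrier G \<longrightarrow> K \<inter> B = {} \<longrightarrow> (\<forall>x\<in>K. \<forall>s\<in>S. x \<otimes> s \<in> K \<union> B) \<longrightarrow> K = {}"
  proof (intro allI impI)
    fix K assume K: "finite K" "K \<subseteq> carrier G" "K \<inter> B = {}" "\<forall>x\<in>K. \<forall>s\<in>S. x \<otimes> s \<in> K \<union> B"
    have "K \<union> \<Union>Fam \<in> Fam"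
    proof -
      have "finite (K \<union> \<Union>Fam)" using K(1) finUF by simp
      moreover have "K \<union> \<Union>Fam \<subseteq> carrier G" using K(2) unfolding Fam_def by blast
      moreover have "(K \<union> \<Union>Fam) \<inter> B0 = {}" using K(3) unfolding B_def Fam_def by blast
      moreover have "\<forall>x\<in>K \<union> \<Union>Fam. \<forall>s\<in>S. x \<otimes> s \<in> (K \<union> \<Union>Fam) \<union> B0"
      proof (intro ballI)
        fix x s assume xK: "x \<in> K \<union> \<Union>Fam" and "s \<in> S"
        from xK show "x \<otimes> s \<in> (K \<union> \<Union>Fam) \<union> B0"
        proof
          assume "x \<in> K" then show ?thesis using K(4) \<open>s \<in> S\<close> unfolding B_def by blast
        next
          assume "x \<in> \<Union>Fam"
          then obtain K0 where "K0 \<in> Fam" "x \<in> K0" by blast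
          then show ?thesis using \<open>s \<in> S\<close> unfolding Fam_def by blast
        qed
      qed
      ultimately show ?thesis unfolding Fam_def by blast
    qed
    then have "K \<subseteq> B" unfolding B_def by blast
    then show "K = {}" using K(3) by blast
  qed
  show ?thesis
    using finB AB BC oneB Bconn Bclosed unfolding relB_def by blast
qed


lemma main_cg:
  fixes Gam :: "nat \<Rightarrow> 'a set"
  assumes nG: "\<And>n. Gam n \<lhd> G" and fr: "\<And>n. finite (rcosets (Gam n))"
    and lim: "(\<Inter>n. \<Union>i\<in>{n..}. Gam i) = {\<one>}" and A: "finite A" "A \<subseteq> carrier G"
  shows "\<exists>B. finite B \<and> A \<subseteq> B \<and> B \<subseteq> carrier G \<and>
           (\<exists>N. \<forall>n\<ge>N. cayley_connected G (Gam n) S (quot_vertices G (Gam n) - (\<lambda>g. g <# Gam n) ` B))"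
proof -
  obtain B where B: "finite B" "A \<subseteq> B" "B \<subseteq> carrier G" "\<one> \<in> B"
     "\<forall>b\<in>B. (\<lambda>x y. x \<in> B \<and> y \<in> B \<and> (\<exists>s\<in>S. y = x \<otimes> s))\<^sup>*\<^sup>* \<one> b"
     "\<forall>K. finite K \<longrightarrow> K \<subseteq> carrier G \<longrightarrow> K \<inter> B = {} \<longrightarrow> (\<forall>x\<in>K. \<forall>s\<in>S. x \<otimes> s \<in> K \<union> B) \<longrightarrow> K = {}"
    using exists_B[OF A] by blast
  define Es where "Es = (\<lambda>(b,b',s). b' \<otimes> inv b \<otimes> s) ` (B \<times> B \<times> insert \<one> S)"
  have EC: "Es \<subseteq> carrier G" unfolding Es_def using B(3) S_sub by auto
  have finEs: "finite Es" unfolding Es_def using B(1) finS by simp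
  define Bad where "Bad = (\<lambda>(x,y). inv x \<otimes> y) ` {(x,y). x \<in> Es \<and> y \<in> Es \<and> x \<noteq> y}"
  have finBad: "finite Bad" unfolding Bad_def
    by (rule finite_imageI, rule finite_subset[of _ "Es \<times> Es"]) (use finEs in auto)
  have "\<forall>g\<in>Bad. \<exists>n. \<forall>i\<ge>n. g \<notin> Gam i"
  proof
    fix g assume "g \<in> Bad"
    then obtain x y where xy: "x \<in> Es" "y \<in> Es" "x \<noteq> y" "g = inv x \<otimes> y" unfolding Bad_def by auto
    have xc: "x \<in> carrier G" "y \<in> carrier G" using xy EC by auto
    have "g \<noteq> \<one>"
    proof
      assume "g = \<one>"
      then have "x \<otimes> (inv x \<otimes> y) = x" using xc xy by simp
      then have "y = x" using xc by (simp add: m_assoc[symmetric])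
      then show False using xy by simp
    qed
    then have "g \<notin> (\<Inter>n. \<Union>i\<in>{n..}. Gam i)" using lim by simp
    then obtain n where "g \<notin> (\<Union>i\<in>{n..}. Gam i)" by blast
    then show "\<exists>n. \<forall>i\<ge>n. g \<notin> Gam i" by auto
  qed
  then obtain N where N: "\<forall>g\<in>Bad. \<exists>k\<le>N. \<forall>i\<ge>k. g \<notin> Gam i"
    using finite_bound[OF finBad, of "\<lambda>g n. \<forall>i\<ge>n. g \<notin> Gam i"] by blast
  have "\<forall>n\<ge>N. cayley_connected G (Gam n) S (quot_vertices G (Gam n) - (\<lambda>g. g <# Gam n) ` B)"
  proof (intro allI impI)
    fix n assume nN: "N \<le> n"
    have finV: "finite (quot_vertices G (Gam n))"
    proof (rule finite_subset[OF _ fr[of n]])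
      show "quot_vertices G (Gam n) \<subseteq> rcosets (Gam n)"
      proof
        fix U assume "U \<in> quot_vertices G (Gam n)"
        then obtain g where g: "g \<in> carrier G" "U = g <# Gam n" unfolding quot_vertices_def by blast
        have "U = Gam n #> g" using g normal.coset_eq[OF nG[of n]] by simp
        moreover have "Gam n \<subseteq> carrier G" using nG[of n] normal_imp_subgroup subgroup.subset by blast
        ultimately show "U \<in> rcosets (Gam n)" using rcosetsI g(1) by simp
      qed
    qed
    have injn: "\<And>x y. x \<in> Es \<Longrightarrow> y \<in> Es \<Longrightarrow> inv x \<otimes> y \<in> Gam n \<Longrightarrow> x = y"
    proof (rule ccontr)
      fix x y assume xy: "x \<in> Es" "y \<in> Es" "inv x \<otimes> y \<in> Gam n" "x \<noteq> y"
      then have "inv x \<otimes> y \<in> Bad" unfolding Bad_def by (intro rev_image_eqI[where x="(x,y)"]) auto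
      then obtain k where "k \<le> N" "\<forall>i\<ge>k. inv x \<otimes> y \<notin> Gam i" using N by blast
      then show False using xy(3) nN by simp
    qed
    interpret c: cay G "Gam n" S B
    proof (rule cay.intro[OF is_group], rule cay_axioms.intro)
      show "Gam n \<lhd> G" by (rule nG)
      show "finite (quot_vertices G (Gam n))" by (rule finV)
      show "S \<subseteq> carrier G" by (rule S_sub)
      show "\<And>s. s \<in> S \<Longrightarrow> inv s \<in> S" by (rule S_inv)
      show "generate G S = carrier G" by (rule gen)
      show "B \<subseteq> carrier G" by (rule B(3))
      show "\<one> \<in> B" by (rule B(4))
      show "\<And>b. b \<in> B \<Longrightarrow> (\<lambda>x y. x \<in> B \<and> y \<in> B \<and> (\<exists>s\<in>S. y = x \<otimes> s))\<^sup>*\<^sup>* \<one> b" using B(5) by blast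
      show "\<And>K. finite K \<Longrightarrow> K \<subseteq> carrier G \<Longrightarrow> K \<inter> B = {} \<Longrightarrow>
                      (\<forall>x\<in>K. \<forall>s\<in>S. x \<otimes> s \<in> K \<union> B) \<Longrightarrow> K = {}" using B(6) by blast
      show "finite B" by (rule B(1))
      show "\<And>x y. x \<in> (\<lambda>(b,b',s). b' \<otimes> inv b \<otimes> s) ` (B \<times> B \<times> insert \<one> S) \<Longrightarrow>
                  y \<in> (\<lambda>(b,b',s). b' \<otimes> inv b \<otimes> s) ` (B \<times> B \<times> insert \<one> S) \<Longrightarrow>
                  inv x \<otimes> y \<in> Gam n \<Longrightarrow> x = y" using injn unfolding Es_def by blast
    qed
    show "cayley_connected G (Gam n) S (quot_vertices G (Gam n) - (\<lambda>g. g <# Gam n) ` B)"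
      by (rule c.W_connected)
  qed
  then show ?thesis using B by blast
qed

end

theorem lemma5p3:
  fixes G :: "('a, 'b) monoid_scheme" and Gam :: "nat \<Rightarrow> 'a set" and S :: "'a set"
  assumes "group G"
    and "infinite (carrier G)"
    and "\<And>n. Gam n \<lhd> G"
    and "\<And>n. finite (rcosets\<^bsub>G\<^esub> (Gam n))"
    and "(\<Inter>n. \<Union>i\<in>{n..}. Gam i) = {\<one>\<^bsub>G\<^esub>}"
    and "finite S"
    and "S \<subseteq> carrier G - {\<one>\<^bsub>G\<^esub>}"
    and "\<And>s. s \<in> S \<Longrightarrow> inv\<^bsub>G\<^esub> s \<in> S"
    and "generate G S = carrier G"
  shows "\<forall>A. finite A \<and> A \<subseteq> carrier G \<longrightarrow>
           (\<exists>B. finite B \<and> A \<subseteq> B \<and> B \<subseteq> carrier G \<and>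
              (\<exists>N. \<forall>n\<ge>N. cayley_connected G (Gam n) S
                   (quot_vertices G (Gam n) - (\<lambda>g. l_coset G g (Gam n)) ` B)))"
proof (intro allI impI)
  fix A assume A: "finite A \<and> A \<subseteq> carrier G"
  interpret cg G S
    by (rule cg.intro[OF assms(1) cg_axioms.intro]) (use assms(6-9) in auto)
  show "\<exists>B. finite B \<and> A \<subseteq> B \<and> B \<subseteq> carrier G \<and>
              (\<exists>N. \<forall>n\<ge>N. cayley_connected G (Gam n) S
                   (quot_vertices G (Gam n) - (\<lambda>g. l_coset G g (Gam n)) ` B))"
    using main_cg[of Gam A] assms(3,4,5) A by blast
qed

end
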